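(* Let $N_e, N_r \ge 1$ be integers. For every binary tensor $\mathcal{X} = (x_{ijk}) \in \{0,1\}^{N_e \times N_e \times N_r}$ there exist a positive integer $D$, a real number $\Delta > 0$, and matrices $A \in \{+\Delta,-\Delta\}^{N_e \times D}$, $B \in \{+\Delta,-\Delta\}^{N_e \times D}$, $C \in \{+\Delta,-\Delta\}^{N_r \times D}$ such that $$\mathcal{X} = \sum_{d=1}^{D} \mathbf{a}_d \otimes \mathbf{b}_d \otimes \mathbf{c}_d,$$ i.e. $x_{ijk} = \sum_{d=1}^D A_{id} B_{jd} C_{kd}$ for all $i,j \in [N_e]$, $k \in [N_r]$.
   Context: $[n]=\{1,\dots,n\}$. $\mathbf{a}_d,\mathbf{b}_d,\mathbf{c}_d$ denote the $d$-th columns of $A,B,C$, and $\mathbf{u}\otimes\mathbf{v}\otimes\mathbf{w}$ is the 3-way outer product with entries $(\mathbf{u}\otimes\mathbf{v}\otimes\mathbf{w})_{ijk}=u_iv_jw_k$. *)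

theory Defs
  imports Main "HOL.Real"
begin

end

theory Submission
  imports Defs
begin

lemma sum_split_add:
  fixes f :: "nat \<Rightarrow> real"
  shows "(\<Sum>d<D1 + D2. f d) = (\<Sum>d<D1. f d) + (\<Sum>d<D2. f (D1 + d))"
  by (induction D2) (auto simp: add.assoc)

definition repD :: "nat \<Rightarrow> (nat \<Rightarrow> nat \<Rightarrow> nat \<Rightarrow> real) \<Rightarrow> bool" where
  "repD D T \<longleftrightarrow> (\<exists>A B C.
     (\<forall>i d. d < D \<longrightarrow> A i d \<in> {1/2, -1/2}) \<and>
     (\<forall>i d. d < D \<longrightarrow> B i d \<in> {1/2, -1/2}) \<and>
     (\<forall>i d. d < D \<longrightarrow> C i d \<in> {1/2, -1/2}) \<and>
     (\<forall>i j k. T i j k = (\<Sum>d<D. A i d * B j d * C k d)))"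

lemma repD_zero0: "repD 0 (\<lambda>i j k. 0)"
  unfolding repD_def by (rule exI[of _ "\<lambda>_ _. 1/2"])+ auto

lemma repD_add:
  assumes "repD D1 T1" "repD D2 T2"
  shows "repD (D1 + D2) (\<lambda>i j k. T1 i j k + T2 i j k)"
proof -
  obtain A1 B1 C1 where h1: "\<forall>i d. d < D1 \<longrightarrow> A1 i d \<in> {1/2, -1/2}"
    "\<forall>i d. d < D1 \<longrightarrow> B1 i d \<in> {1/2, -1/2}" "\<forall>i d. d < D1 \<longrightarrow> C1 i d \<in> {1/2, -1/2}"
    "\<forall>i j k. T1 i j k = (\<Sum>d<D1. A1 i d * B1 j d * C1 k d)"
    using assms(1) unfolding repD_def by blast
  obtain A2 B2 C2 where h2: "\<forall>i d. d < D2 \<longrightarrow> A2 i d \<in> {1/2, -1/2}"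
    "\<forall>i d. d < D2 \<longrightarrow> B2 i d \<in> {1/2, -1/2}" "\<forall>i d. d < D2 \<longrightarrow> C2 i d \<in> {1/2, -1/2}"
    "\<forall>i j k. T2 i j k = (\<Sum>d<D2. A2 i d * B2 j d * C2 k d)"
    using assms(2) unfolding repD_def by blast
  define A where "A i d = (if d < D1 then A1 i d else A2 i (d - D1))" for i d
  define B where "B i d = (if d < D1 then B1 i d else B2 i (d - D1))" for i d
  define C where "C i d = (if d < D1 then C1 i d else C2 i (d - D1))" for i d
  have s: "(\<Sum>d<D1 + D2. A i d * B j d * C k d) = T1 i j k + T2 i j k" for i j k
    unfolding sum_split_add using h1(4) h2(4) by (simp add: A_def B_def C_def)
  show ?thesis unfolding repD_def
    apply (rule exI[of _ A], rule exI[of _ B], rule exI[of _ C])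
    using h1 h2 s by (auto simp: A_def B_def C_def)
qed

lemma repD_rank1:
  assumes "\<forall>i. a i \<in> {1/2, -1/2}" "\<forall>i. b i \<in> {1/2, -1/2}" "\<forall>i. c i \<in> {1/2, -1/2}"
  shows "repD 1 (\<lambda>i j k. a i * b j * c k)"
  unfolding repD_def
  apply (rule exI[of _ "\<lambda>i d. a i"], rule exI[of _ "\<lambda>i d. b i"], rule exI[of _ "\<lambda>i d. c i"])
  using assms by auto

lemma repD_zero2: "repD 2 (\<lambda>i j k. 0)"
proof -
  have "repD (1+1) (\<lambda>i j k. (\<lambda>i j k. (1/2::real) * (1/2) * (1/2)) i j k + (\<lambda>i j k. (1/2) * (1/2) * (-1/2)) i j k)"
    by (rule repD_add; rule repD_rank1) auto
  then show ?thesis by (simp add: numeral_2_eq_2)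
qed

lemma repD_8:
  assumes "\<forall>i. a i \<in> {1/2, -1/2}" "\<forall>i. b i \<in> {1/2, -1/2}" "\<forall>i. c i \<in> {1/2, -1/2}"
    "\<forall>i. a' i \<in> {1/2, -1/2}" "\<forall>i. b' i \<in> {1/2, -1/2}" "\<forall>i. c' i \<in> {1/2, -1/2}"
  shows "\<exists>D. repD D (\<lambda>i j k. (a i + a' i) * (b j + b' j) * (c k + c' k))"
proof -
  let ?T = "\<lambda>i j k. a i * b j * c k + (a i * b j * c' k + (a i * b' j * c k + (a i * b' j * c' k
     + (a' i * b j * c k + (a' i * b j * c' k + (a' i * b' j * c k + a' i * b' j * c' k))))))"
  have "repD (1+(1+(1+(1+(1+(1+(1+1))))))) ?T"
    by (intro repD_add repD_rank1; use assms in auto)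
  moreover have "?T = (\<lambda>i j k. (a i + a' i) * (b j + b' j) * (c k + c' k))"
    by (intro ext) (simp add: algebra_simps)
  ultimately show ?thesis by auto
qed

lemma repD_sum:
  assumes "finite S" "\<And>t. t \<in> S \<Longrightarrow> \<exists>D. repD D (f t)"
  shows "\<exists>D. repD D (\<lambda>i j k. \<Sum>t\<in>S. f t i j k)"
  using assms
proof (induction S rule: finite_induct)
  case empty
  then show ?case using repD_zero0 by auto
next
  case (insert x F)
  then obtain D1 D2 where "repD D1 (f x)" "repD D2 (\<lambda>i j k. \<Sum>t\<in>F. f t i j k)" by blast
  from repD_add[OF this] show ?case using insert by auto
qed

definition ind :: "nat \<times> nat \<times> nat \<Rightarrow> nat \<Rightarrow> nat \<Rightarrow> nat \<Rightarrow> real" where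
  "ind t i j k = (if (i, j, k) = t then 1 else 0)"

lemma repD_ind: "\<exists>D. repD D (ind t)"
proof -
  obtain i0 j0 k0 where t: "t = (i0, j0, k0)" by (cases t) auto
  let ?p = "\<lambda>i::nat. (1/2::real)"
  let ?q = "\<lambda>i0 i::nat. if i = i0 then (1/2::real) else -1/2"
  have "\<exists>D. repD D (\<lambda>i j k. (?p i + ?q i0 i) * (?p j + ?q j0 j) * (?p k + ?q k0 k))"
    by (rule repD_8) auto
  moreover have "(\<lambda>i j k. (?p i + ?q i0 i) * (?p j + ?q j0 j) * (?p k + ?q k0 k)) = ind t"
    by (intro ext) (auto simp: ind_def t)
  ultimately show ?thesis by simp
qed

theorem theorem1:
  fixes Ne Nr :: nat and X :: "nat \<Rightarrow> nat \<Rightarrow> nat \<Rightarrow> real"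
  assumes "Ne \<ge> 1" and "Nr \<ge> 1"
    and "\<forall>i<Ne. \<forall>j<Ne. \<forall>k<Nr. X i j k \<in> {0, 1}"
  shows "\<exists>(D::nat) (\<Delta>::real) (A::nat \<Rightarrow> nat \<Rightarrow> real) (B::nat \<Rightarrow> nat \<Rightarrow> real)
           (C::nat \<Rightarrow> nat \<Rightarrow> real).
           D \<ge> 1 \<and> \<Delta> > 0 \<and>
           (\<forall>i<Ne. \<forall>d<D. A i d \<in> {\<Delta>, -\<Delta>}) \<and>
           (\<forall>j<Ne. \<forall>d<D. B j d \<in> {\<Delta>, -\<Delta>}) \<and>
           (\<forall>k<Nr. \<forall>d<D. C k d \<in> {\<Delta>, -\<Delta>}) \<and>
           (\<forall>i<Ne. \<forall>j<Ne. \<forall>k<Nr. X i j k = (\<Sum>d<D. A i d * B j d * C k d))"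
proof -
  define S where "S = {t \<in> {..<Ne} \<times> {..<Ne} \<times> {..<Nr}. X (fst t) (fst (snd t)) (snd (snd t)) = 1}"
  have fin: "finite S" unfolding S_def by auto
  obtain D1 where r1: "repD D1 (\<lambda>i j k. \<Sum>t\<in>S. ind t i j k)"
    using repD_sum[OF fin, of ind] repD_ind by blast
  have "repD (D1 + 2) (\<lambda>i j k. (\<lambda>i j k. \<Sum>t\<in>S. ind t i j k) i j k + (\<lambda>i j k. 0) i j k)"
    by (rule repD_add[OF r1 repD_zero2])
  then obtain A B C where h: "\<forall>i d. d < D1 + 2 \<longrightarrow> A i d \<in> {1/2, -1/2}"
    "\<forall>i d. d < D1 + 2 \<longrightarrow> B i d \<in> {1/2, -1/2}" "\<forall>i d. d < D1 + 2 \<longrightarrow> C i d \<in> {1/2, -1/2}"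
    "\<forall>i j k. (\<Sum>t\<in>S. ind t i j k) = (\<Sum>d<D1 + 2. A i d * B j d * C k d)"
    unfolding repD_def by auto
  have sumind: "(\<Sum>t\<in>S. ind t i j k) = (if (i, j, k) \<in> S then 1 else 0)" for i j k
  proof -
    have "(\<Sum>t\<in>S. ind t i j k) = (\<Sum>t\<in>S. if (i, j, k) = t then 1 else 0)"
      by (simp add: ind_def)
    also have "\<dots> = (if (i, j, k) \<in> S then 1 else 0)"
      using fin by (simp add: sum.delta)
    finally show ?thesis .
  qed
  have eq: "X i j k = (\<Sum>d<D1 + 2. A i d * B j d * C k d)" if "i < Ne" "j < Ne" "k < Nr" for i j k
  proof -
    have "X i j k \<in> {0, 1}" using assms(3) that by blast
    then have "X i j k = (if (i, j, k) \<in> S then 1 else 0)" using that by (auto simp: S_def)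
    then show ?thesis using h(4) sumind by metis
  qed
  show ?thesis
    apply (rule exI[of _ "D1 + 2"], rule exI[of _ "1/2"], rule exI[of _ A], rule exI[of _ B], rule exI[of _ C])
    using h eq by auto
qed

end
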